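(* Let $X\subseteq\mathbb{R}^n$ be a nonempty closed convex set with $0\in X$, $\|\cdot\|$ the Euclidean norm, $D(x\|x')=\tfrac12\|x-x'\|^2$, and suppose $\max_{x,x'\in X}D(x\|x')\le F^2$. Let $\tau\in\mathbb{N}$, $T\in\mathbb{N}$, and let $f_1,\dots,f_{T+\tau}:\mathbb{R}^n\to\mathbb{R}$ be convex differentiable functions with $\|\nabla f_t(x)\|\le L$ for all $x\in X$ and all $t$. Let $x^*\in X$ be a minimizer over $X$ of $f^*(x)=\frac1T\sum_{t=1}^Tf_t(x)$, and suppose each $f_t$ is strongly convex with parameter $\lambda>0$ in the sense that $f_t(x^* )\ge f_t(x)+\langle x^*-x,\nabla f_t(x)\rangle+\frac{\lambda}{2}\|x-x^*\|^2$ for all $x\in X$. Run delayed stochastic gradient descent: $x_1=\dots=x_{\tau+1}=0$, $g_t=\nabla f_t(x_t)$, and for $t=\tau+1,\dots,T+\tau$, $x_{t+1}=\operatorname{argmin}_{x\in X}\|x-(x_t-\eta_tg_{t-\tau})\|$, with learning rate $\eta_t=\frac{1}{\lambda(t-\tau)}$ for $t>\tau$ and $\eta_t=0$ for $t\le\tau$. Then the regret $R[X]=\sum_{t=1}^T\big(f_t(x_t)-f_t(x^* )\big)$ satisfies $$R[X]\le \lambda\tau F^2+\Big[\tfrac12+\tau\Big]\frac{L^2}{\lambda}\big(1+\tau+\log T\big).$$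
   Context: $\log$ denotes the natural logarithm. *)

theory Defs
  imports "HOL-Analysis.Analysis"
begin

end

theory Submission
  imports Defs
begin

lemma harm_bound: "(\<Sum>k=1..n. 1 / real k) \<le> 1 + ln (real n)"
proof (cases "n = 0")
  case True then show ?thesis by simp
next
  case False
  have "harm n - ln (real n) \<le> harm 1 - ln (real (1::nat))"
    using euler_mascheroni_sequence_decreasing[of 1 n] False by simp
  then have "harm n \<le> (1::real) + ln (real n)" by (simp add: harm_def)
  then show ?thesis by (simp add: harm_def divide_inverse)
qed

lemma wtele: fixes d :: "nat \<Rightarrow> real"
  shows "(\<Sum>s=1..n. real s * (d (s+tau) - d (s+tau+1))) = (\<Sum>s=1..n. d (s+tau)) - real n * d (n+tau+1)"
  by (induction n) (simp_all add: algebra_simps)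

lemma shiftsum: fixes d :: "nat \<Rightarrow> real"
  shows "(\<Sum>s=1..n. d (s+tau) - d s) = (\<Sum>j=1..tau. d (n+j) - d j)"
proof (induction tau)
  case 0 then show ?case by simp
next
  case (Suc m)
  have "(\<Sum>s=1..n. d (s+Suc m) - d s) = (\<Sum>s=1..n. d (s+m) - d s) + (\<Sum>s=1..n. d (Suc (s+m)) - d (s+m))"
    by (simp add: sum.distrib[symmetric])
  also have "(\<Sum>s=1..n. d (Suc (s+m)) - d (s+m)) = d (n+Suc m) - d (Suc m)"
  proof -
    have "(\<Sum>s=1..n. d (Suc (s+m)) - d (s+m)) = (\<Sum>s=1..n. (\<lambda>i. d (i+m)) (Suc s) - (\<lambda>i. d (i+m)) s)" by simp
    also have "\<dots> = d (Suc n + m) - d (1+m)" by (subst sum_Suc_diff) auto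
    finally show ?thesis by simp
  qed
  finally show ?case using Suc by simp
qed

lemma delaysum: "(\<Sum>s=1..n. if i < s then 1 / real (s - i) else 0) = (\<Sum>k=1..n-i. 1 / real k)"
proof (induction n)
  case 0 then show ?case by simp
next
  case (Suc n)
  show ?case
  proof (cases "i < Suc n")
    case True
    then have "Suc n - i = Suc (n - i)" by simp
    then show ?thesis using Suc True by simp
  next
    case False
    then have "Suc n - i = 0" "n - i = 0" by simp_all
    then show ?thesis using Suc False by simp
  qed
qed

lemma delaysum2: "(\<Sum>s=1..n. if i < s then 1 / real (s - i) else 0) \<le> (\<Sum>k=1..n. 1 / real k)"
  unfolding delaysum by (rule sum_mono2) auto

theorem theorem4:
  fixes X :: "(real ^ 'n) set"
    and F L lam :: real
    and tau T :: nat
    and f :: "nat \<Rightarrow> real ^ 'n \<Rightarrow> real"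
    and grad :: "nat \<Rightarrow> real ^ 'n \<Rightarrow> real ^ 'n"
    and xstar :: "real ^ 'n"
    and x :: "nat \<Rightarrow> real ^ 'n"
    and eta :: "nat \<Rightarrow> real"
  assumes X_ne: "X \<noteq> {}" and X_closed: "closed X" and X_convex: "convex X"
    and X_0: "0 \<in> X"
    and diam: "\<forall>y\<in>X. \<forall>y'\<in>X. (1/2) * (norm (y - y'))\<^sup>2 \<le> F\<^sup>2"
    and f_convex: "\<forall>t\<in>{1..T+tau}. convex_on UNIV (f t)"
    and f_grad: "\<forall>t\<in>{1..T+tau}. \<forall>y. (f t has_derivative (\<lambda>h. grad t y \<bullet> h)) (at y)"
    and grad_bound: "\<forall>t\<in>{1..T+tau}. \<forall>y\<in>X. norm (grad t y) \<le> L"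
    and xstar_in: "xstar \<in> X"
    and xstar_min: "\<forall>y\<in>X. (1 / real T) * (\<Sum>t=1..T. f t xstar) \<le> (1 / real T) * (\<Sum>t=1..T. f t y)"
    and lam_pos: "lam > 0"
    and strong: "\<forall>t\<in>{1..T+tau}. \<forall>y\<in>X.
        f t xstar \<ge> f t y + (xstar - y) \<bullet> grad t y + (lam / 2) * (norm (y - xstar))\<^sup>2"
    and eta_def: "\<forall>t. eta t = (if t > tau then 1 / (lam * real (t - tau)) else 0)"
    and x_init: "\<forall>t\<in>{1..tau+1}. x t = 0"
    and x_step: "\<forall>t\<in>{tau+1..T+tau}.
        x (t + 1) = closest_point X (x t - eta t *\<^sub>R grad (t - tau) (x (t - tau)))"
  shows "(\<Sum>t=1..T. f t (x t) - f t xstar)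
           \<le> lam * real tau * F\<^sup>2 + (1/2 + real tau) * (L\<^sup>2 / lam) * (1 + real tau + ln (real T))"
  proof (cases "T = 0")
  case True
  then show ?thesis using lam_pos by simp
next
  case False
  then have T1: "T \<ge> 1" by simp
  have L0: "L \<ge> 0" using grad_bound X_0 T1 by (metis atLeastAtMost_iff le_add1 norm_ge_zero order_trans)
  define g where "g s = grad s (x s)" for s
  define d where "d t = (norm (x t - xstar))\<^sup>2" for t
  define b where "b j = (if tau < j then L / (lam * real (j - tau)) else 0)" for j
  have inX: "1 \<le> t \<longrightarrow> t \<le> T+tau+1 \<longrightarrow> x t \<in> X" for t
  proof (induction t)
    case 0 then show ?case by simp
  next
    case (Suc t)
    show ?case
    proof (cases "Suc t \<le> tau + 1")
      case True then show ?thesis using x_init X_0 by auto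
    next
      case False
      show ?thesis
      proof (intro impI)
        assume "Suc t \<le> T + tau + 1"
        then have "t \<in> {tau+1..T+tau}" using False by auto
        then have "x (Suc t) = closest_point X (x t - eta t *\<^sub>R grad (t - tau) (x (t - tau)))"
          using x_step by simp
        then show "x (Suc t) \<in> X" using closest_point_in_set X_closed X_ne by simp
      qed
    qed
  qed
  have b0: "b j \<ge> 0" for j unfolding b_def using L0 lam_pos by simp
  have stepb: "norm (x (j+1) - x j) \<le> b j" if j: "j \<in> {1..T+tau}" for j
  proof (cases "tau < j")
    case False
    then have "x (j+1) = 0" "x j = 0" using x_init j by auto
    then show ?thesis using b0 by simp
  next
    case True
    then have jj: "j \<in> {tau+1..T+tau}" using j by auto
    have xj: "x j \<in> X" using inX j by auto
    have xjt: "x (j - tau) \<in> X" using inX j True by auto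
    have "j - tau \<in> {1..T+tau}" using j True by auto
    then have gb: "norm (grad (j - tau) (x (j - tau))) \<le> L" using grad_bound xjt by blast
    have "norm (x (j+1) - x j) = dist (closest_point X (x j - eta j *\<^sub>R grad (j - tau) (x (j - tau)))) (closest_point X (x j))"
      using x_step jj closest_point_self[OF xj] by (simp add: dist_norm)
    also have "\<dots> \<le> dist (x j - eta j *\<^sub>R grad (j - tau) (x (j - tau))) (x j)"
      by (rule closest_point_lipschitz[OF X_convex X_closed X_ne])
    also have "\<dots> = eta j * norm (grad (j - tau) (x (j - tau)))"
      using eta_def True lam_pos by (simp add: dist_norm)
    also have "\<dots> \<le> eta j * L" using gb eta_def True lam_pos by (intro mult_left_mono) auto
    also have "\<dots> = b j" using eta_def True unfolding b_def by simp
    finally show ?thesis .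
  qed
  have distb: "s + m \<le> T + tau \<longrightarrow> norm (x s - x (s+m)) \<le> (\<Sum>k<m. b (s+k))" if s: "s \<ge> 1" for s m
  proof (induction m)
    case 0 then show ?case by simp
  next
    case (Suc m)
    show ?case
    proof
      assume h: "s + Suc m \<le> T + tau"
      have "norm (x s - x (s + Suc m)) \<le> norm (x s - x (s+m)) + norm (x (s+m+1) - x (s+m))"
        using norm_triangle_ineq[of "x s - x (s+m)" "x (s+m) - x (s+m+1)"]
        by (simp add: norm_minus_commute)
      also have "\<dots> \<le> (\<Sum>k<m. b (s+k)) + b (s+m)"
        using Suc h stepb[of "s+m"] s by (intro add_mono) auto
      finally show "norm (x s - x (s + Suc m)) \<le> (\<Sum>k<Suc m. b (s+k))" by simp
    qed
  qed
  have d0: "d t \<ge> 0" for t unfolding d_def by simp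
  have persum: "f s (x s) - f s xstar \<le> lam * real s / 2 * (d (s+tau) - d (s+tau+1)) - lam / 2 * d s
      + L\<^sup>2 / (2 * lam * real s) + L * (\<Sum>k<tau. b (s+k))" if s: "s \<in> {1..T}" for s
  proof -
    define t where "t = s + tau"
    define et where "et = eta t"
    have et: "et = 1 / (lam * real s)" using eta_def s unfolding et_def t_def by simp
    have etpos: "et > 0" using et s lam_pos by simp
    have xs: "x s \<in> X" using inX s by auto
    have xt: "x t \<in> X" using inX s unfolding t_def by auto
    have gb: "norm (g s) \<le> L" using grad_bound xs s unfolding g_def by auto
    have a: "f s (x s) - f s xstar \<le> (x s - xstar) \<bullet> g s - lam/2 * d s"
    proof -
      have "f s xstar \<ge> f s (x s) + (xstar - x s) \<bullet> g s + (lam / 2) * d s"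
        using strong s xs unfolding g_def d_def by (simp add: Ball_def)
      moreover have "(xstar - x s) \<bullet> g s = - ((x s - xstar) \<bullet> g s)"
        by (simp add: inner_diff_left)
      ultimately show ?thesis by linarith
    qed
    have proj: "norm (x (t+1) - xstar) \<le> norm (x t - et *\<^sub>R g s - xstar)"
    proof -
      have "t \<in> {tau+1..T+tau}" using s unfolding t_def by auto
      then have "x (t+1) = closest_point X (x t - et *\<^sub>R g s)"
        using x_step unfolding et_def g_def t_def by simp
      then have "norm (x (t+1) - xstar) = dist (closest_point X (x t - et *\<^sub>R g s)) (closest_point X xstar)"
        using closest_point_self[OF xstar_in] by (simp add: dist_norm)
      also have "\<dots> \<le> dist (x t - et *\<^sub>R g s) xstar"
        using closest_point_lipschitz[OF X_convex X_closed X_ne] by simp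
      finally show ?thesis by (simp add: dist_norm)
    qed
    have expand: "(norm (x t - et *\<^sub>R g s - xstar))\<^sup>2 = d t - 2 * et * ((x t - xstar) \<bullet> g s) + et\<^sup>2 * (norm (g s))\<^sup>2"
    proof -
      have "x t - et *\<^sub>R g s - xstar = (x t - xstar) - et *\<^sub>R g s" by simp
      then show ?thesis unfolding d_def
        by (simp only: power2_norm_eq_inner inner_diff_left inner_diff_right inner_scaleR_left inner_scaleR_right inner_commute[of "g s" "x t - xstar"]) (simp add: power2_eq_square algebra_simps inner_commute)
    qed
    have b_: "d (t+1) \<le> d t - 2 * et * ((x t - xstar) \<bullet> g s) + et\<^sup>2 * (norm (g s))\<^sup>2"
    proof -
      have "d (t+1) \<le> (norm (x t - et *\<^sub>R g s - xstar))\<^sup>2"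
        unfolding d_def using proj by (intro power_mono) auto
      then show ?thesis using expand by simp
    qed
    have c: "(x t - xstar) \<bullet> g s \<le> lam * real s / 2 * (d t - d (t+1)) + (norm (g s))\<^sup>2 / (2 * lam * real s)"
    proof -
      have k: "lam * real s * et = 1" using et s lam_pos by simp
      have "lam * real s / 2 * d (t+1) \<le> lam * real s / 2 * (d t - 2 * et * ((x t - xstar) \<bullet> g s) + et\<^sup>2 * (norm (g s))\<^sup>2)"
        using b_ s lam_pos by (intro mult_left_mono) auto
      also have "\<dots> = lam * real s / 2 * d t - (lam * real s * et) * ((x t - xstar) \<bullet> g s) + (lam * real s * et) * et / 2 * (norm (g s))\<^sup>2"
        by (simp add: algebra_simps power2_eq_square)
      also have "\<dots> = lam * real s / 2 * d t - ((x t - xstar) \<bullet> g s) + (norm (g s))\<^sup>2 / (2 * lam * real s)"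
        unfolding k using et by simp
      finally have h: "lam * real s / 2 * d (t+1) \<le> lam * real s / 2 * d t - ((x t - xstar) \<bullet> g s) + (norm (g s))\<^sup>2 / (2 * lam * real s)" .
      have "lam * real s / 2 * (d t - d (t+1)) = lam * real s / 2 * d t - lam * real s / 2 * d (t+1)"
        by (simp add: right_diff_distrib)
      then show ?thesis using h by linarith
    qed
    have dd: "(x s - x t) \<bullet> g s \<le> L * (\<Sum>k<tau. b (s+k))"
    proof -
      have "(x s - x t) \<bullet> g s \<le> norm (x s - x t) * norm (g s)" by (rule norm_cauchy_schwarz)
      also have "\<dots> \<le> (\<Sum>k<tau. b (s+k)) * L"
        using distb[of s tau] s gb unfolding t_def by (intro mult_mono) (auto simp: b0 sum_nonneg)
      finally show ?thesis by (simp add: mult.commute)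
    qed
    have e: "(norm (g s))\<^sup>2 / (2 * lam * real s) \<le> L\<^sup>2 / (2 * lam * real s)"
      using gb s lam_pos by (intro divide_right_mono power_mono) auto
    have "(x s - xstar) \<bullet> g s = (x t - xstar) \<bullet> g s + (x s - x t) \<bullet> g s"
      by (simp add: inner_diff_left)
    then show ?thesis using a c dd e unfolding t_def by linarith
  qed
  define H where "H = 1 + ln (real T)"
  have Hb: "(\<Sum>k=1..T. 1 / real k) \<le> H" unfolding H_def by (rule harm_bound)
  have H0: "H \<ge> 0" unfolding H_def using T1 by simp
  have sum1: "(\<Sum>s=1..T. lam * real s / 2 * (d (s+tau) - d (s+tau+1)) - lam / 2 * d s) \<le> lam * real tau * F\<^sup>2"
  proof -
    have "(\<Sum>s=1..T. lam * real s / 2 * (d (s+tau) - d (s+tau+1)) - lam / 2 * d s)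
        = lam / 2 * ((\<Sum>s=1..T. real s * (d (s+tau) - d (s+tau+1))) - (\<Sum>s=1..T. d s))"
    proof -
        have "(\<Sum>s=1..T. lam * real s / 2 * (d (s+tau) - d (s+tau+1)) - lam / 2 * d s)
           = lam / 2 * (\<Sum>s=1..T. real s * (d (s+tau) - d (s+tau+1)) - d s)"
          unfolding sum_distrib_left by (rule sum.cong) (auto simp: algebra_simps)
        then show ?thesis by (simp add: sum_subtractf)
      qed
    also have "\<dots> = lam / 2 * ((\<Sum>s=1..T. d (s+tau)) - real T * d (T+tau+1) - (\<Sum>s=1..T. d s))"
      by (subst wtele) (rule refl)
    also have "\<dots> \<le> lam / 2 * ((\<Sum>s=1..T. d (s+tau)) - (\<Sum>s=1..T. d s))"
      using lam_pos d0[of "T+tau+1"] by (intro mult_left_mono) auto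
    also have "\<dots> = lam / 2 * (\<Sum>j=1..tau. d (T+j) - d j)"
      using shiftsum[of d tau T] by (simp add: sum_subtractf)
    also have "\<dots> \<le> lam / 2 * (\<Sum>j=1..tau. 2 * F\<^sup>2)"
    proof (intro mult_left_mono sum_mono)
      fix j assume j: "j \<in> {1..tau}"
      have "x (T+j) \<in> X" using inX j by auto
      then have "(1/2) * (norm (x (T+j) - xstar))\<^sup>2 \<le> F\<^sup>2" using diam xstar_in by blast
      then show "d (T+j) - d j \<le> 2 * F\<^sup>2" using d0[of j] unfolding d_def by linarith
    qed (use lam_pos in auto)
    also have "\<dots> = lam * real tau * F\<^sup>2" by simp
    finally show ?thesis .
  qed
  have sum2: "(\<Sum>s=1..T. L\<^sup>2 / (2 * lam * real s)) \<le> L\<^sup>2 / (2 * lam) * H"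
  proof -
    have "(\<Sum>s=1..T. L\<^sup>2 / (2 * lam * real s)) = L\<^sup>2 / (2 * lam) * (\<Sum>s=1..T. 1 / real s)"
      by (simp add: sum_distrib_left)
    also have "\<dots> \<le> L\<^sup>2 / (2 * lam) * H" using Hb lam_pos by (intro mult_left_mono) auto
    finally show ?thesis .
  qed
  have sum3: "(\<Sum>s=1..T. L * (\<Sum>k<tau. b (s+k))) \<le> real tau * (L\<^sup>2 / lam) * H"
  proof -
    have "(\<Sum>s=1..T. L * (\<Sum>k<tau. b (s+k))) = L * (\<Sum>k<tau. \<Sum>s=1..T. b (s+k))"
    proof -
        have "(\<Sum>s=1..T. \<Sum>k<tau. b (s+k)) = (\<Sum>k<tau. \<Sum>s=1..T. b (s+k))" by (rule sum.swap)
        then show ?thesis by (simp add: sum_distrib_left[symmetric])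
      qed
    also have "\<dots> \<le> L * (\<Sum>k<tau. L / lam * H)"
    proof (intro mult_left_mono sum_mono)
      fix k assume k: "k \<in> {..<tau}"
      have "(\<Sum>s=1..T. b (s+k)) = (\<Sum>s=1..T. L / lam * (if tau - k < s then 1 / real (s - (tau - k)) else 0))"
      proof (rule sum.cong)
        fix s assume "s \<in> {1..T}"
        show "b (s+k) = L / lam * (if tau - k < s then 1 / real (s - (tau - k)) else 0)"
          using k unfolding b_def by (auto simp: of_nat_diff)
      qed simp
      also have "\<dots> = L / lam * (\<Sum>s=1..T. if tau - k < s then 1 / real (s - (tau - k)) else 0)"
        by (simp add: sum_distrib_left)
      also have "\<dots> \<le> L / lam * H"
        using delaysum2[where n=T and i="tau - k"] Hb L0 lam_pos by (intro mult_left_mono) auto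
      finally show "(\<Sum>s=1..T. b (s+k)) \<le> L / lam * H" .
    qed (use L0 in auto)
    also have "\<dots> = real tau * (L\<^sup>2 / lam) * H" by (simp add: power2_eq_square)
    finally show ?thesis .
  qed
  have "(\<Sum>t=1..T. f t (x t) - f t xstar) \<le> (\<Sum>s=1..T. (lam * real s / 2 * (d (s+tau) - d (s+tau+1)) - lam / 2 * d s)
      + L\<^sup>2 / (2 * lam * real s) + L * (\<Sum>k<tau. b (s+k)))"
    by (rule sum_mono) (use persum in auto)
  also have "\<dots> = (\<Sum>s=1..T. lam * real s / 2 * (d (s+tau) - d (s+tau+1)) - lam / 2 * d s)
      + (\<Sum>s=1..T. L\<^sup>2 / (2 * lam * real s)) + (\<Sum>s=1..T. L * (\<Sum>k<tau. b (s+k)))"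
    by (simp add: sum.distrib)
  also have "\<dots> \<le> lam * real tau * F\<^sup>2 + L\<^sup>2 / (2 * lam) * H + real tau * (L\<^sup>2 / lam) * H"
    using sum1 sum2 sum3 by linarith
  also have "\<dots> = lam * real tau * F\<^sup>2 + (1/2 + real tau) * (L\<^sup>2 / lam) * H"
    by (simp add: algebra_simps)
  also have "\<dots> \<le> lam * real tau * F\<^sup>2 + (1/2 + real tau) * (L\<^sup>2 / lam) * (1 + real tau + ln (real T))"
    unfolding H_def using lam_pos by (intro add_left_mono mult_left_mono) auto
  finally show ?thesis .
qed

end
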